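(* Let $\widetilde{C}_4$ be the infinite graph with vertex set $\{0,u,0',d\}\cup\{1,2,3,\dots\}\cup\{-1,-2,-3,\dots\}$ and edge set $\{\{0,u\},\{u,0'\},\{0',d\},\{d,0\}\}\cup\{\{n,n+1\}:n\ge1\}\cup\{\{-n,-n-1\}:n\ge1\}\cup\{\{0',-1\},\{0,1\}\}$. Let $U$ be the Grover walk operator on $\ell^2(A(\widetilde{C}_4))$, let $\Psi_0\in\ell^2(A(\widetilde{C}_4))$ with $\|\Psi_0\|=1$, let $\Psi_t=U^t\Psi_0$, and let $X_t$ be the $\mathbb{Z}$-valued random variable with $\mathbb{P}(X_t=j)=\sum_{v\in V_j}\mu_t(v)$, where $V_j=\{j\}$ for $j\neq0$ and $V_0=\{0,u,0',d\}$. Let $c=((0',u),(u,0),(0,d),(d,0'))$ and let $\bar c=((0',d),(d,0),(0,u),(u,0'))$ be the reversed cycle. For $m\in\{1,2,3,4\}$ put $\Gamma_m=\mathrm{span}\{w^{(m)}(c)-w^{(m)}(\bar c)\}$, and let $\Gamma=\Gamma_1+\Gamma_2+\Gamma_3+\Gamma_4$. Then localization occurs for the sequence of distributions of $X_t$ (that is, there is an integer $j$ with $\limsup_{t\to\infty}\mathbb{P}(X_t=j)>0$) if and only if $\Psi_0\notin\Gamma^{\perp}$.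
   Context: $A(G)=\{(u,v):\{u,v\}\in E(G)\}$ is the set of arcs of $G$; for $e=(u,v)$ write $o(e)=u$, $t(e)=v$ and $\bar e=(v,u)$. The Hilbert space $\ell^2(A(G))$ has the standard basis $\{\delta_e\}_{e\in A(G)}$. The Grover walk operator $U$ on $\ell^2(A(G))$ is defined by $$\langle\delta_f,U\delta_e\rangle=\Big(\tfrac{2}{\deg o(e)}-\delta_{e,\bar f}\Big)\mathbf 1_{\{o(e)=t(f)\}}.$$ The distribution at time $t$ is $\mu_t(v)=\sum_{e:\,o(e)=v}|\Psi_t(e)|^2$. For a path $p=(e_1,\dots,e_n)$ and $m\in\mathbb{N}$, set $w^{(m)}(p)=\sum_{j=1}^n e^{2\pi i m j/n}\delta_{e_j}$; here $n=4$. Localization of a sequence of distributions $\rho_t$ on $\mathbb{Z}$ means that there exists an integer $j$ with $\limsup_{t\to\infty}\rho_t(j)>0$. *)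

theory Defs
  imports "HOL-Analysis.Analysis" "HOL-Library.Liminf_Limsup"
begin

text \<open>Vertices of the graph C4-tilde: N j is the integer vertex j (N 0 is the vertex 0),
  Uv is u, Zp is 0', Dv is d.\<close>
datatype vert = N int | Uv | Zp | Dv

definition edges :: "vert set set" where
  "edges = {{N 0, Uv}, {Uv, Zp}, {Zp, Dv}, {Dv, N 0}}
     \<union> {{N n, N (n + 1)} | n. n \<ge> 1}
     \<union> {{N (- n), N (- n - 1)} | n. n \<ge> 1}
     \<union> {{Zp, N (-1)}, {N 0, N 1}}"

definition arcs :: "(vert \<times> vert) set" where
  "arcs = {(a, b). {a, b} \<in> edges}"

definition deg :: "vert \<Rightarrow> nat" where
  "deg v = card {w. {v, w} \<in> edges}"

definition grover :: "(vert \<times> vert \<Rightarrow> complex) \<Rightarrow> (vert \<times> vert \<Rightarrow> complex)" where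
  "grover \<psi> f = (if f \<in> arcs then
     (\<Sum>e\<in>{e \<in> arcs. fst e = snd f}.
        (complex_of_real (2 / real (deg (fst e))) - (if e = prod.swap f then 1 else 0)) * \<psi> e)
   else 0)"

definition mu :: "(vert \<times> vert \<Rightarrow> complex) \<Rightarrow> vert \<Rightarrow> real" where
  "mu \<psi> v = (\<Sum>e\<in>{e \<in> arcs. fst e = v}. (cmod (\<psi> e))\<^sup>2)"

definition Vset :: "int \<Rightarrow> vert set" where
  "Vset j = (if j = 0 then {N 0, Uv, Zp, Dv} else {N j})"

definition probX :: "(vert \<times> vert \<Rightarrow> complex) \<Rightarrow> int \<Rightarrow> real" where
  "probX \<psi> j = (\<Sum>v\<in>Vset j. mu \<psi> v)"

definition wvec :: "nat \<Rightarrow> (vert \<times> vert) list \<Rightarrow> (vert \<times> vert \<Rightarrow> complex)" where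
  "wvec m p = (\<lambda>e. \<Sum>j\<in>{1..length p}.
      (if p ! (j - 1) = e
       then exp (2 * pi * \<i> * of_nat m * of_nat j / of_nat (length p)) else 0))"

definition cyc :: "(vert \<times> vert) list" where
  "cyc = [(Zp, Uv), (Uv, N 0), (N 0, Dv), (Dv, Zp)]"

definition cycbar :: "(vert \<times> vert) list" where
  "cycbar = [(Zp, Dv), (Dv, N 0), (N 0, Uv), (Uv, Zp)]"

definition gvec :: "nat \<Rightarrow> (vert \<times> vert \<Rightarrow> complex)" where
  "gvec m = (\<lambda>e. wvec m cyc e - wvec m cycbar e)"

definition Gamma :: "(vert \<times> vert \<Rightarrow> complex) set" where
  "Gamma = {(\<lambda>e. \<Sum>m\<in>{1..4}. a m * gvec m e) | a :: nat \<Rightarrow> complex. True}"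

definition l2 :: "(vert \<times> vert \<Rightarrow> complex) set" where
  "l2 = {\<psi>. (\<forall>e. e \<notin> arcs \<longrightarrow> \<psi> e = 0) \<and> (\<lambda>e. (cmod (\<psi> e))\<^sup>2) summable_on arcs}"

definition l2norm :: "(vert \<times> vert \<Rightarrow> complex) \<Rightarrow> real" where
  "l2norm \<psi> = sqrt (infsum (\<lambda>e. (cmod (\<psi> e))\<^sup>2) arcs)"

definition l2inner :: "(vert \<times> vert \<Rightarrow> complex) \<Rightarrow> (vert \<times> vert \<Rightarrow> complex) \<Rightarrow> complex" where
  "l2inner \<phi> \<psi> = infsum (\<lambda>e. cnj (\<phi> e) * \<psi> e) arcs"

definition perp :: "(vert \<times> vert \<Rightarrow> complex) set \<Rightarrow> (vert \<times> vert \<Rightarrow> complex) set" where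
  "perp S = {\<psi> \<in> l2. \<forall>\<phi>\<in>S. l2inner \<phi> \<psi> = 0}"

end

theory Submission
  imports Defs
begin

fun nbrs :: "vert \<Rightarrow> vert set" where
  "nbrs (N n) = (if n = 0 then {Uv, Dv, N 1} else if n = -1 then {Zp, N (-2)}
                 else {N (n - 1), N (n + 1)})"
| "nbrs Uv = {N 0, Zp}"
| "nbrs Zp = {Uv, Dv, N (-1)}"
| "nbrs Dv = {Zp, N 0}"

lemma memA: "{v,w} \<in> {{N n, N (n + 1)} | n. n \<ge> 1} \<longleftrightarrow>
  (\<exists>a b. v = N a \<and> w = N b \<and> ((a \<ge> 1 \<and> b = a + 1) \<or> (b \<ge> 1 \<and> a = b + 1)))"
proof
  assume "{v,w} \<in> {{N n, N (n + 1)} | n. n \<ge> 1}"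
  then have "\<exists>n. {v,w} = {N n, N (n+1)} \<and> n \<ge> 1" by (simp only: mem_Collect_eq)
  then obtain n where n: "{v,w} = {N n, N (n+1)}" "n \<ge> 1" by (elim exE conjE)
  then have "(v = N n \<and> w = N (n+1)) \<or> (v = N (n+1) \<and> w = N n)" by (simp only: doubleton_eq_iff)
  then show "\<exists>a b. v = N a \<and> w = N b \<and> ((a \<ge> 1 \<and> b = a + 1) \<or> (b \<ge> 1 \<and> a = b + 1))"
    using n(2) by (elim disjE conjE) simp_all
next
  assume "\<exists>a b. v = N a \<and> w = N b \<and> ((a \<ge> 1 \<and> b = a + 1) \<or> (b \<ge> 1 \<and> a = b + 1))"
  then obtain a b where ab: "v = N a" "w = N b" "(a \<ge> 1 \<and> b = a + 1) \<or> (b \<ge> 1 \<and> a = b + 1)" by (elim exE conjE)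
  show "{v,w} \<in> {{N n, N (n + 1)} | n. n \<ge> 1}"
  proof (cases "a \<ge> 1 \<and> b = a + 1")
    case True
    have h: "{v,w} = {N a, N (a+1)} \<and> a \<ge> 1" using True ab by simp
    show ?thesis by (rule CollectI, rule exI[of _ a], rule h)
  next
    case False then have "b \<ge> 1 \<and> a = b + 1" using ab(3) by blast
    then have h: "{v,w} = {N b, N (b+1)} \<and> b \<ge> 1" using ab by (simp add: insert_commute)
    show ?thesis by (rule CollectI, rule exI[of _ b], rule h)
  qed
qed

lemma memB: "{v,w} \<in> {{N (- n), N (- n - 1)} | n. n \<ge> 1} \<longleftrightarrow>
  (\<exists>a b. v = N a \<and> w = N b \<and> ((a \<le> -1 \<and> b = a - 1) \<or> (b \<le> -1 \<and> a = b - 1)))"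
proof
  assume "{v,w} \<in> {{N (- n), N (- n - 1)} | n. n \<ge> 1}"
  then have "\<exists>n. {v,w} = {N (-n), N (-n-1)} \<and> n \<ge> 1" by (simp only: mem_Collect_eq)
  then obtain n where n: "{v,w} = {N (-n), N (-n-1)}" "n \<ge> 1" by (elim exE conjE)
  then have "(v = N (-n) \<and> w = N (-n-1)) \<or> (v = N (-n-1) \<and> w = N (-n))" by (simp only: doubleton_eq_iff)
  then show "\<exists>a b. v = N a \<and> w = N b \<and> ((a \<le> -1 \<and> b = a - 1) \<or> (b \<le> -1 \<and> a = b - 1))"
    using n(2) by (elim disjE conjE) simp_all
next
  assume "\<exists>a b. v = N a \<and> w = N b \<and> ((a \<le> -1 \<and> b = a - 1) \<or> (b \<le> -1 \<and> a = b - 1))"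
  then obtain a b where ab: "v = N a" "w = N b" "(a \<le> -1 \<and> b = a - 1) \<or> (b \<le> -1 \<and> a = b - 1)" by (elim exE conjE)
  show "{v,w} \<in> {{N (- n), N (- n - 1)} | n. n \<ge> 1}"
  proof (cases "a \<le> -1 \<and> b = a - 1")
    case True
    have h: "{v,w} = {N (-(-a)), N (-(-a)-1)} \<and> -a \<ge> 1" using True ab by simp
    show ?thesis by (rule CollectI, rule exI[of _ "-a"], rule h)
  next
    case False then have "b \<le> -1 \<and> a = b - 1" using ab(3) by blast
    then have h: "{v,w} = {N (-(-b)), N (-(-b)-1)} \<and> -b \<ge> 1" using ab by (simp add: insert_commute)
    show ?thesis by (rule CollectI, rule exI[of _ "-b"], rule h)
  qed
qed

lemma edges_iff: "{v, w} \<in> edges \<longleftrightarrow>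
   {v,w} \<in> {{N 0, Uv}, {Uv, Zp}, {Zp, Dv}, {Dv, N 0}} \<or>
  (\<exists>a b. v = N a \<and> w = N b \<and> ((a \<ge> 1 \<and> b = a + 1) \<or> (b \<ge> 1 \<and> a = b + 1))) \<or>
  (\<exists>a b. v = N a \<and> w = N b \<and> ((a \<le> -1 \<and> b = a - 1) \<or> (b \<le> -1 \<and> a = b - 1))) \<or>
   {v,w} \<in> {{Zp, N (-1)}, {N 0, N 1}}"
  by (simp only: edges_def Un_iff memA memB disj_assoc)

lemma edge_iff: "{v, w} \<in> edges \<longleftrightarrow> w \<in> nbrs v"
  unfolding edges_iff
  apply (cases v; cases w)
  apply (simp_all only: insert_iff empty_iff doubleton_eq_iff vert.inject vert.distinct simp_thms ex_simps nbrs.simps)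
  apply simp_all
  apply presburger
  done

lemma arc_iff: "(v,w) \<in> arcs \<longleftrightarrow> w \<in> nbrs v"
  by (simp add: arcs_def edge_iff)

lemma nbrs_sym: "w \<in> nbrs v \<longleftrightarrow> v \<in> nbrs w"
  by (metis edge_iff insert_commute)

lemma finite_nbrs: "finite (nbrs v)"
  by (cases v) auto

lemma out_arcs: "{e \<in> arcs. fst e = v} = Pair v ` nbrs v"
  by (auto simp: arc_iff)

lemma deg_eq: "deg v = card (nbrs v)"
  by (simp add: deg_def edge_iff)

lemma grover_gen:
  assumes "v \<in> nbrs a"
  shows "grover \<psi> (a, v) = complex_of_real (2 / real (card (nbrs v))) * (\<Sum>w\<in>nbrs v. \<psi> (v, w)) - \<psi> (v, a)"
proof -
  have av: "a \<in> nbrs v" using assms nbrs_sym by blast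
  have "grover \<psi> (a, v) = (\<Sum>e\<in>Pair v ` nbrs v.
        (complex_of_real (2 / real (deg (fst e))) - (if e = prod.swap (a, v) then 1 else 0)) * \<psi> e)"
    unfolding grover_def out_arcs using assms by (simp add: arc_iff)
  also have "\<dots> = (\<Sum>w\<in>nbrs v. (complex_of_real (2 / real (card (nbrs v))) - (if w = a then 1 else 0)) * \<psi> (v, w))"
    by (subst sum.reindex) (auto simp: inj_on_def deg_eq)
  also have "\<dots> = (\<Sum>w\<in>nbrs v. complex_of_real (2 / real (card (nbrs v))) * \<psi> (v, w))
       - (\<Sum>w\<in>nbrs v. (if w = a then \<psi> (v, w) else 0))"
    unfolding sum_subtractf[symmetric] by (rule sum.cong) (auto simp: algebra_simps)
  also have "\<dots> = complex_of_real (2 / real (card (nbrs v))) * (\<Sum>w\<in>nbrs v. \<psi> (v, w)) - \<psi> (v, a)"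
    using av finite_nbrs[of v] by (simp add: sum_distrib_left sum.delta)
  finally show ?thesis .
qed

definition S0 :: "(vert \<times> vert \<Rightarrow> complex) \<Rightarrow> complex" where
  "S0 \<psi> = \<psi> (N 0, Uv) + \<psi> (N 0, Dv) + \<psi> (N 0, N 1)"
definition SZ :: "(vert \<times> vert \<Rightarrow> complex) \<Rightarrow> complex" where
  "SZ \<psi> = \<psi> (Zp, Uv) + \<psi> (Zp, Dv) + \<psi> (Zp, N (-1))"

lemma g3_0: "v \<in> nbrs (N 0) \<Longrightarrow> grover \<psi> (v, N 0) = 2/3 * S0 \<psi> - \<psi> (N 0, v)"
  by (subst grover_gen) (auto simp: nbrs_sym S0_def add.assoc)
lemma g3_Z: "v \<in> nbrs Zp \<Longrightarrow> grover \<psi> (v, Zp) = 2/3 * SZ \<psi> - \<psi> (Zp, v)"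
  by (subst grover_gen) (auto simp: nbrs_sym SZ_def add.assoc)

lemma g_u0: "grover \<psi> (Uv, N 0) = 2/3 * S0 \<psi> - \<psi> (N 0, Uv)" by (rule g3_0) simp
lemma g_d0: "grover \<psi> (Dv, N 0) = 2/3 * S0 \<psi> - \<psi> (N 0, Dv)" by (rule g3_0) simp
lemma g_10: "grover \<psi> (N 1, N 0) = 2/3 * S0 \<psi> - \<psi> (N 0, N 1)" by (rule g3_0) simp
lemma g_uz: "grover \<psi> (Uv, Zp) = 2/3 * SZ \<psi> - \<psi> (Zp, Uv)" by (rule g3_Z) simp
lemma g_dz: "grover \<psi> (Dv, Zp) = 2/3 * SZ \<psi> - \<psi> (Zp, Dv)" by (rule g3_Z) simp
lemma g_m1z: "grover \<psi> (N (-1), Zp) = 2/3 * SZ \<psi> - \<psi> (Zp, N (-1))" by (rule g3_Z) simp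

lemma g_0u: "grover \<psi> (N 0, Uv) = \<psi> (Uv, Zp)" by (subst grover_gen) auto
lemma g_0d: "grover \<psi> (N 0, Dv) = \<psi> (Dv, Zp)" by (subst grover_gen) auto
lemma g_zu: "grover \<psi> (Zp, Uv) = \<psi> (Uv, N 0)" by (subst grover_gen) auto
lemma g_zd: "grover \<psi> (Zp, Dv) = \<psi> (Dv, N 0)" by (subst grover_gen) auto
lemma g_01: "grover \<psi> (N 0, N 1) = \<psi> (N 1, N 2)" by (subst grover_gen) auto
lemma g_zm1: "grover \<psi> (Zp, N (-1)) = \<psi> (N (-1), N (-2))" by (subst grover_gen) auto
lemma g_in_r: "n \<ge> 1 \<Longrightarrow> grover \<psi> (N n, N (n+1)) = \<psi> (N (n+1), N (n+2))"
  by (subst grover_gen) (auto simp: card_insert_if algebra_simps)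
lemma g_in_l: "n \<le> -1 \<Longrightarrow> grover \<psi> (N n, N (n-1)) = \<psi> (N (n-1), N (n-2))"
  by (subst grover_gen) (auto simp: card_insert_if algebra_simps)
lemma g_out_r: "n \<ge> 1 \<Longrightarrow> grover \<psi> (N (n+1), N n) = \<psi> (N n, N (n-1))"
  by (subst grover_gen) (auto simp: card_insert_if algebra_simps)
lemma g_out_l: "n \<le> -2 \<Longrightarrow> grover \<psi> (N (n-1), N n) = \<psi> (N n, N (n+1))"
  by (subst grover_gen) (auto simp: card_insert_if algebra_simps)
lemma g_out_l1: "grover \<psi> (N (-2), N (-1)) = \<psi> (N (-1), Zp)"
  by (subst grover_gen) auto


definition E :: "nat \<Rightarrow> nat \<Rightarrow> complex" where
  "E m j = exp (2 * pi * \<i> * of_nat m * of_nat j / of_nat 4)"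
lemma E_eq: "E m j = \<i> ^ (m * j)"
proof -
  have "2 * pi * \<i> * of_nat m * of_nat j / of_nat 4 = of_nat (m*j) * (\<i> * complex_of_real (pi / 2))"
    by (simp add: field_simps)
  then show ?thesis unfolding E_def by (simp only: exp_of_nat_mult cis_conv_exp[symmetric] cis_pi_half)
qed
lemma set14: "{1..4::nat} = {1,2,3,4}" by auto
lemma wvec4: "length p = 4 \<Longrightarrow> wvec m p e = (if p!0 = e then E m 1 else 0) + (if p!1 = e then E m 2 else 0)
   + (if p!2 = e then E m 3 else 0) + (if p!3 = e then E m 4 else 0)"
proof -
  assume l: "length p = 4"
  have "wvec m p e = (\<Sum>j\<in>{1,2,3,4}. if p!(j-1) = e then exp (2 * pi * \<i> * of_nat m * of_nat j / of_nat 4) else 0)"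
    unfolding wvec_def by (simp only: l set14)
  also have "\<dots> = (if p!0 = e then E m 1 else 0) + (if p!1 = e then E m 2 else 0)
   + (if p!2 = e then E m 3 else 0) + (if p!3 = e then E m 4 else 0)"
    by (simp add: E_def algebra_simps)
  finally show ?thesis .
qed

definition Cset :: "(vert \<times> vert) set" where
  "Cset = {(Zp, Uv), (Zp, Dv), (Uv, N 0), (Dv, N 0), (N 0, Dv), (N 0, Uv), (Dv, Zp), (Uv, Zp)}"

lemma gvec_vals:
  "gvec m (Zp, Uv) = E m 1" "gvec m (Zp, Dv) = - E m 1"
  "gvec m (Uv, N 0) = E m 2" "gvec m (Dv, N 0) = - E m 2"
  "gvec m (N 0, Dv) = E m 3" "gvec m (N 0, Uv) = - E m 3"
  "gvec m (Dv, Zp) = E m 4" "gvec m (Uv, Zp) = - E m 4"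
  unfolding gvec_def by (simp_all add: wvec4 cyc_def cycbar_def)

lemma gvec_out: "e \<notin> Cset \<Longrightarrow> gvec m e = 0"
  unfolding gvec_def Cset_def by (auto simp add: wvec4 cyc_def cycbar_def)

lemma Cset_arcs: "Cset \<subseteq> arcs"
  unfolding Cset_def by (auto simp: arc_iff)

lemma finite_Cset: "finite Cset" unfolding Cset_def by simp

lemma l2inner_C: assumes "\<And>e. e \<notin> Cset \<Longrightarrow> \<phi> e = 0"
  shows "l2inner \<phi> \<psi> = (\<Sum>e\<in>Cset. cnj (\<phi> e) * \<psi> e)"
proof -
  have "l2inner \<phi> \<psi> = infsum (\<lambda>e. cnj (\<phi> e) * \<psi> e) Cset"
    unfolding l2inner_def by (rule infsum_cong_neutral) (use assms Cset_arcs in auto)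
  then show ?thesis using finite_Cset by simp
qed

definition dP :: "(vert \<times> vert \<Rightarrow> complex) \<Rightarrow> complex" where "dP \<psi> = \<psi> (N 0, Uv) - \<psi> (N 0, Dv)"
definition dQ :: "(vert \<times> vert \<Rightarrow> complex) \<Rightarrow> complex" where "dQ \<psi> = \<psi> (Uv, N 0) - \<psi> (Dv, N 0)"
definition dR :: "(vert \<times> vert \<Rightarrow> complex) \<Rightarrow> complex" where "dR \<psi> = \<psi> (Uv, Zp) - \<psi> (Dv, Zp)"
definition dS :: "(vert \<times> vert \<Rightarrow> complex) \<Rightarrow> complex" where "dS \<psi> = \<psi> (Zp, Uv) - \<psi> (Zp, Dv)"

lemma sumC: "(\<Sum>e\<in>Cset. f e) = f (Zp, Uv) + f (Zp, Dv) + f (Uv, N 0) + f (Dv, N 0) + f (N 0, Dv) + f (N 0, Uv) + f (Dv, Zp) + f (Uv, Zp)"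
  unfolding Cset_def by (simp add: algebra_simps)

lemma Im_eq: "(\<Sum>e\<in>Cset. cnj (gvec m e) * \<psi> e) =
   cnj (E m 1) * dS \<psi> + cnj (E m 2) * dQ \<psi> - cnj (E m 3) * dP \<psi> - cnj (E m 4) * dR \<psi>"
  unfolding sumC gvec_vals dP_def dQ_def dR_def dS_def by (simp add: algebra_simps)

lemma Gamma_out: "\<phi> \<in> Gamma \<Longrightarrow> e \<notin> Cset \<Longrightarrow> \<phi> e = 0"
  unfolding Gamma_def by (auto simp: gvec_out)

lemma solve4: fixes P Q R S :: complex
  assumes i1: "- \<i> * S - Q - \<i> * P - R = 0" and i2: "- S + Q + P - R = 0"
      and i3: "\<i> * S - Q + \<i> * P - R = 0" and i4: "S + Q - P - R = 0"
  shows "P = 0 \<and> Q = 0 \<and> R = 0 \<and> S = 0"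
proof -
  have e1: "(- \<i> * S - Q - \<i> * P - R) + (\<i> * S - Q + \<i> * P - R) = -2 * (Q + R)" by (simp add: algebra_simps)
  have e2: "(- S + Q + P - R) + (S + Q - P - R) = 2 * (Q - R)" by (simp add: algebra_simps)
  have e3: "(- S + Q + P - R) - (S + Q - P - R) = 2 * (P - S)" by (simp add: algebra_simps)
  have e4: "(\<i> * S - Q + \<i> * P - R) - (- \<i> * S - Q - \<i> * P - R) = 2 * \<i> * (P + S)" by (simp add: algebra_simps)
  have a: "Q + R = 0" using e1 unfolding i1 i3 by (simp add: add_eq_0_iff)
  have b: "Q - R = 0" using e2 unfolding i2 i4 by simp
  have c: "P - S = 0" using e3 unfolding i2 i4 by simp
  have d: "P + S = 0" using e4 unfolding i1 i3 by (simp add: add_eq_0_iff)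
  have "2 * Q = (Q + R) + (Q - R)" "2 * R = (Q + R) - (Q - R)" "2 * P = (P + S) + (P - S)" "2 * S = (P + S) - (P - S)"
    by (simp_all add: algebra_simps)
  then show ?thesis unfolding a b c d by simp
qed

lemma ipow: "\<i> ^ 1 = \<i>" "\<i> ^ 2 = -1" "\<i> ^ 3 = -\<i>" "\<i> ^ 4 = 1" "\<i> ^ 6 = -1"
  "\<i> ^ 8 = 1" "\<i> ^ 9 = \<i>" "\<i> ^ 12 = 1" "\<i> ^ 16 = 1"
  by (simp_all add: eval_nat_numeral)

lemma perp_iff: assumes "\<psi> \<in> l2"
  shows "\<psi> \<in> perp Gamma \<longleftrightarrow> dP \<psi> = 0 \<and> dQ \<psi> = 0 \<and> dR \<psi> = 0 \<and> dS \<psi> = 0"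
proof
  assume "\<psi> \<in> perp Gamma"
  then have h: "\<And>\<phi>. \<phi> \<in> Gamma \<Longrightarrow> l2inner \<phi> \<psi> = 0" unfolding perp_def by blast
  have I: "(\<Sum>e\<in>Cset. cnj (gvec m e) * \<psi> e) = 0" if "m \<in> {1..4}" for m
  proof -
    have eq: "(\<lambda>e. \<Sum>k\<in>{1..4}. (if k = m then 1 else 0) * gvec k e) = gvec m"
    proof
      fix e
      have "(\<Sum>k\<in>{1..4}. (if k = m then 1 else 0) * gvec k e) = (\<Sum>k\<in>{1..4}. if k = m then gvec k e else 0)"
        by (rule sum.cong) auto
      also have "\<dots> = gvec m e" using that by (subst sum.delta) auto
      finally show "(\<Sum>k\<in>{1..4}. (if k = m then 1 else 0) * gvec k e) = gvec m e" .
    qed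
    have gG: "gvec m \<in> Gamma" unfolding Gamma_def
      by (rule CollectI, rule exI[of _ "\<lambda>k. if k = m then 1 else 0"], rule conjI[OF eq[symmetric] TrueI])
    show ?thesis using h[OF gG] l2inner_C[of "gvec m" \<psi>, OF gvec_out] by simp
  qed
  have i1: "- \<i> * dS \<psi> - dQ \<psi> - \<i> * dP \<psi> - dR \<psi> = 0"
    using I[of 1] unfolding Im_eq E_eq by (simp add: ipow)
  have i2: "- dS \<psi> + dQ \<psi> + dP \<psi> - dR \<psi> = 0"
    using I[of 2] unfolding Im_eq E_eq by (simp add: ipow)
  have i3: "\<i> * dS \<psi> - dQ \<psi> + \<i> * dP \<psi> - dR \<psi> = 0"
    using I[of 3] unfolding Im_eq E_eq by (simp add: ipow)
  have i4: "dS \<psi> + dQ \<psi> - dP \<psi> - dR \<psi> = 0"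
    using I[of 4] unfolding Im_eq E_eq by (simp add: ipow)
  from solve4[OF i1 i2 i3 i4] show "dP \<psi> = 0 \<and> dQ \<psi> = 0 \<and> dR \<psi> = 0 \<and> dS \<psi> = 0" .
next
  assume d: "dP \<psi> = 0 \<and> dQ \<psi> = 0 \<and> dR \<psi> = 0 \<and> dS \<psi> = 0"
  show "\<psi> \<in> perp Gamma" unfolding perp_def
  proof (intro CollectI conjI ballI assms)
    fix \<phi> assume ph: "\<phi> \<in> Gamma"
    then obtain a where a: "\<phi> = (\<lambda>e. \<Sum>m\<in>{1..4}. a m * gvec m e)" unfolding Gamma_def by blast
    have "l2inner \<phi> \<psi> = (\<Sum>e\<in>Cset. cnj (\<phi> e) * \<psi> e)" by (rule l2inner_C) (rule Gamma_out[OF ph])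
    also have "\<dots> = (\<Sum>m\<in>{1..4}. cnj (a m) * (\<Sum>e\<in>Cset. cnj (gvec m e) * \<psi> e))"
      unfolding a by (simp add: sum_distrib_left sum_distrib_right mult.assoc) (rule sum.swap)
    also have "\<dots> = 0" unfolding Im_eq using d by simp
    finally show "l2inner \<phi> \<psi> = 0" .
  qed
qed


lemma decay_real:
  fixes a d :: "nat \<Rightarrow> real"
  assumes nn: "\<And>t. 0 \<le> a t" and rec: "\<And>t. a (t + 4) \<le> a t / 9 + d t" and d: "d \<longlonglongrightarrow> 0"
  shows "a \<longlonglongrightarrow> 0"
proof (rule LIMSEQ_I)
  fix \<epsilon> :: real assume "0 < \<epsilon>"
  define \<delta> where "\<delta> = \<epsilon> / 4"
  have \<delta>: "0 < \<delta>" using \<open>0 < \<epsilon>\<close> by (simp add: \<delta>_def)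
  obtain T where T: "\<forall>t\<ge>T. norm (d t - 0) < \<delta>" using LIMSEQ_D[OF d \<delta>] by blast
  define M where "M = Max (a ` {T..<T+4})"
  have M: "a t \<le> M" if "T \<le> t" "t < T + 4" for t
    unfolding M_def using that by (intro Max_ge) auto
  have M0: "0 \<le> M" using M[of T] nn[of T] by simp
  have claim: "a t \<le> M * (1/9) ^ ((t - T) div 4) + 2 * \<delta>" if "T \<le> t" for t
    using that
  proof (induct t rule: less_induct)
    case (less t)
    show ?case
    proof (cases "t < T + 4")
      case True
      then have "(t - T) div 4 = 0" by simp
      then show ?thesis using M[OF less.prems True] \<delta> by simp
    next
      case False
      define s where "s = t - 4"
      have s: "t = s + 4" "T \<le> s" "s < t" using False by (auto simp: s_def)
      have IH: "a s \<le> M * (1/9) ^ ((s - T) div 4) + 2 * \<delta>" using less.hyps[OF s(3) s(2)] .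
      have ds: "d s < \<delta>" using T s(2) by auto
      have k: "(t - T) div 4 = Suc ((s - T) div 4)" using s by simp
      have "a t \<le> a s / 9 + d s" using rec[of s] s(1) by simp
      also have "\<dots> \<le> (M * (1/9) ^ ((s - T) div 4) + 2 * \<delta>) / 9 + \<delta>" using divide_right_mono[OF IH, of 9] ds by linarith
      also have "\<dots> \<le> M * (1/9) ^ ((t - T) div 4) + 2 * \<delta>" unfolding k using \<delta> by simp
      finally show ?thesis .
    qed
  qed
  obtain K where K: "(1/9::real) ^ K < \<delta> / (M + 1)" using real_arch_pow_inv[of "\<delta> / (M + 1)" "1/9"] \<delta> M0 by auto
  show "\<exists>no. \<forall>n\<ge>no. norm (a n - 0) < \<epsilon>"
  proof (intro exI allI impI)
    fix n assume n: "T + 4 * K \<le> n"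
    have "4 * K \<le> n - T" using n by simp
    then have "(4 * K) div 4 \<le> (n - T) div 4" by (rule div_le_mono)
    then have "K \<le> (n - T) div 4" by simp
    then have p: "(1/9::real) ^ ((n - T) div 4) \<le> (1/9) ^ K" by (intro power_decreasing) auto
    have "M * (1/9::real) ^ ((n - T) div 4) \<le> (M + 1) * (1/9) ^ K"
      using p M0 by (intro mult_mono) auto
    also have "\<dots> < \<delta>" using K M0 by (simp add: field_simps)
    finally have "M * (1/9::real) ^ ((n - T) div 4) < \<delta>" .
    then have "a n < 3 * \<delta>" using claim[of n] n by simp
    then show "norm (a n - 0) < \<epsilon>" using nn[of n] \<open>0 < \<epsilon>\<close> by (simp add: \<delta>_def)
  qed
qed

lemma decay:
  fixes x e :: "nat \<Rightarrow> complex"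
  assumes rec: "\<And>t. x (t + 4) = x t / 9 + e t" and e: "e \<longlonglongrightarrow> 0"
  shows "x \<longlonglongrightarrow> 0"
proof -
  have "(\<lambda>t. norm (x t)) \<longlonglongrightarrow> 0"
  proof (rule decay_real)
    fix t show "norm (x (t + 4)) \<le> norm (x t) / 9 + norm (e t)"
      unfolding rec by (rule order_trans[OF norm_triangle_ineq]) (simp add: norm_divide)
  next
    show "(\<lambda>t. norm (e t)) \<longlonglongrightarrow> 0" using e by (simp add: tendsto_norm_zero_iff)
  qed simp
  then show ?thesis by (simp add: tendsto_norm_zero_iff)
qed



definition Psi :: "(vert \<times> vert \<Rightarrow> complex) \<Rightarrow> nat \<Rightarrow> (vert \<times> vert \<Rightarrow> complex)" where
  "Psi p t = (grover ^^ t) p"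

lemma Psi_0: "Psi p 0 = p" by (simp add: Psi_def)
lemma Psi_Suc: "Psi p (Suc t) = grover (Psi p t)" by (simp add: Psi_def)

lemma dP_g: "dP (grover \<psi>) = dR \<psi>" unfolding dP_def dR_def by (simp add: g_0u g_0d)
lemma dQ_g: "dQ (grover \<psi>) = - dP \<psi>" unfolding dQ_def dP_def by (simp add: g_u0 g_d0)
lemma dR_g: "dR (grover \<psi>) = - dS \<psi>" unfolding dR_def dS_def by (simp add: g_uz g_dz)
lemma dS_g: "dS (grover \<psi>) = dQ \<psi>" unfolding dS_def dQ_def by (simp add: g_zu g_zd)

definition Aen :: "(vert \<times> vert \<Rightarrow> complex) \<Rightarrow> real" where
  "Aen \<psi> = (cmod (dP \<psi>))\<^sup>2 + (cmod (dQ \<psi>))\<^sup>2 + (cmod (dR \<psi>))\<^sup>2 + (cmod (dS \<psi>))\<^sup>2"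

lemma Aen_g: "Aen (grover \<psi>) = Aen \<psi>"
  unfolding Aen_def dP_g dQ_g dR_g dS_g by simp

lemma Aen_Psi: "Aen (Psi p t) = Aen p"
  by (induct t) (simp_all add: Psi_0 Psi_Suc Aen_g)

lemma Aen_zero: "Aen \<psi> = 0 \<longleftrightarrow> dP \<psi> = 0 \<and> dQ \<psi> = 0 \<and> dR \<psi> = 0 \<and> dS \<psi> = 0"
  unfolding Aen_def by (simp add: add_nonneg_eq_0_iff)

definition sP :: "(vert \<times> vert \<Rightarrow> complex) \<Rightarrow> complex" where "sP \<psi> = \<psi> (N 0, Uv) + \<psi> (N 0, Dv)"
definition sQ :: "(vert \<times> vert \<Rightarrow> complex) \<Rightarrow> complex" where "sQ \<psi> = \<psi> (Uv, N 0) + \<psi> (Dv, N 0)"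
definition sR :: "(vert \<times> vert \<Rightarrow> complex) \<Rightarrow> complex" where "sR \<psi> = \<psi> (Uv, Zp) + \<psi> (Dv, Zp)"
definition sS :: "(vert \<times> vert \<Rightarrow> complex) \<Rightarrow> complex" where "sS \<psi> = \<psi> (Zp, Uv) + \<psi> (Zp, Dv)"

lemma sP_g: "sP (grover \<psi>) = sR \<psi>" unfolding sP_def sR_def by (simp add: g_0u g_0d)
lemma sQ_g: "sQ (grover \<psi>) = sP \<psi> / 3 + 4/3 * \<psi> (N 0, N 1)"
  unfolding sQ_def sP_def by (simp add: g_u0 g_d0 S0_def field_simps)
lemma sR_g: "sR (grover \<psi>) = sS \<psi> / 3 + 4/3 * \<psi> (Zp, N (-1))"
  unfolding sR_def sS_def by (simp add: g_uz g_dz SZ_def field_simps)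
lemma sS_g: "sS (grover \<psi>) = sQ \<psi>" unfolding sS_def sQ_def by (simp add: g_zu g_zd)

lemma in_r: "n \<ge> 1 \<Longrightarrow> Psi p t (N n, N (n+1)) = p (N (n + int t), N (n + int t + 1))"
proof (induct t arbitrary: n)
  case 0 then show ?case by (simp add: Psi_0)
next
  case (Suc t)
  have "Psi p (Suc t) (N n, N (n+1)) = Psi p t (N (n+1), N (n+1+1))"
    using Suc.prems by (simp add: Psi_Suc g_in_r add.assoc)
  also have "\<dots> = p (N (n + 1 + int t), N (n + 1 + int t + 1))" using Suc.prems by (intro Suc.hyps) simp
  finally show ?case by (simp add: algebra_simps)
qed

lemma in_l: "n \<le> -1 \<Longrightarrow> Psi p t (N n, N (n-1)) = p (N (n - int t), N (n - int t - 1))"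
proof (induct t arbitrary: n)
  case 0 then show ?case by (simp add: Psi_0)
next
  case (Suc t)
  have "Psi p (Suc t) (N n, N (n-1)) = Psi p t (N (n-1), N (n-1-1))"
    using Suc.prems by (simp add: Psi_Suc g_in_l)
  also have "\<dots> = p (N (n - 1 - int t), N (n - 1 - int t - 1))" using Suc.prems by (intro Suc.hyps) simp
  finally show ?case by (simp add: algebra_simps)
qed

lemma l2_tail:
  assumes "p \<in> l2" and inj: "inj h" and sub: "range h \<subseteq> arcs"
  shows "(\<lambda>k. p (h k)) \<longlonglongrightarrow> 0"
proof -
  have s: "(\<lambda>e. (cmod (p e))\<^sup>2) summable_on arcs" using assms(1) by (simp add: l2_def)
  have "(\<lambda>e. (cmod (p e))\<^sup>2) summable_on range h" by (rule summable_on_subset_banach[OF s sub])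
  then have "((\<lambda>e. (cmod (p e))\<^sup>2) \<circ> h) summable_on UNIV"
    using summable_on_reindex[OF inj, of "\<lambda>e. (cmod (p e))\<^sup>2"] by blast
  then have "summable (\<lambda>k. (cmod (p (h k)))\<^sup>2)"
    by (subst summable_on_UNIV_nonneg_real_iff[symmetric]) (auto simp: o_def)
  then have "(\<lambda>k. (cmod (p (h k)))\<^sup>2) \<longlonglongrightarrow> 0" by (rule summable_LIMSEQ_zero)
  then have "(\<lambda>k. sqrt ((cmod (p (h k)))\<^sup>2)) \<longlonglongrightarrow> sqrt 0" by (rule tendsto_real_sqrt)
  then have "(\<lambda>k. cmod (p (h k))) \<longlonglongrightarrow> 0" by simp
  then show ?thesis by (simp add: tendsto_norm_zero_iff)
qed

lemma tail_r: "p \<in> l2 \<Longrightarrow> (\<lambda>k. p (N (int k + 1), N (int k + 2))) \<longlonglongrightarrow> 0"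
  by (rule l2_tail[where h = "\<lambda>k. (N (int k + 1), N (int k + 2))", simplified])
     (auto simp: inj_def arc_iff algebra_simps)

lemma tail_l: "p \<in> l2 \<Longrightarrow> (\<lambda>k. p (N (- int k - 1), N (- int k - 2))) \<longlonglongrightarrow> 0"
  by (rule l2_tail[where h = "\<lambda>k. (N (- int k - 1), N (- int k - 2))", simplified])
     (auto simp: inj_def arc_iff algebra_simps)


lemma LIMSEQ_shift_iff: "(\<lambda>t. f (Suc t)) \<longlonglongrightarrow> (0::complex) \<Longrightarrow> f \<longlonglongrightarrow> 0"
  by (rule LIMSEQ_imp_Suc)

lemma alpha_lim: "p \<in> l2 \<Longrightarrow> (\<lambda>t. Psi p t (N 0, N 1)) \<longlonglongrightarrow> 0"
proof -
  assume p: "p \<in> l2"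
  have eq: "(\<lambda>t. Psi p (Suc t) (N 0, N 1)) = (\<lambda>k. p (N (int k + 1), N (int k + 2)))"
  proof
    fix t
    have "Psi p (Suc t) (N 0, N 1) = Psi p t (N 1, N (1 + 1))" unfolding Psi_Suc g_01 by simp
    also have "\<dots> = p (N (1 + int t), N (1 + int t + 1))" by (rule in_r) simp
    finally show "Psi p (Suc t) (N 0, N 1) = p (N (int t + 1), N (int t + 2))" by (simp add: algebra_simps)
  qed
  have "(\<lambda>t. Psi p (Suc t) (N 0, N 1)) \<longlonglongrightarrow> 0" unfolding eq by (rule tail_r[OF p])
  then show ?thesis by (rule LIMSEQ_imp_Suc)
qed

lemma beta_lim: "p \<in> l2 \<Longrightarrow> (\<lambda>t. Psi p t (Zp, N (-1))) \<longlonglongrightarrow> 0"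
proof -
  assume p: "p \<in> l2"
  have eq: "(\<lambda>t. Psi p (Suc t) (Zp, N (-1))) = (\<lambda>k. p (N (- int k - 1), N (- int k - 2)))"
  proof
    fix t
    have "Psi p (Suc t) (Zp, N (-1)) = Psi p t (N (-1), N (-1 - 1))" by (simp add: Psi_Suc g_zm1)
    also have "\<dots> = p (N (-1 - int t), N (-1 - int t - 1))" by (rule in_l) simp
    finally have c: "Psi p (Suc t) (Zp, N (-1)) = p (N (-1 - int t), N (-1 - int t - 1))" .
    have e1: "-1 - int t = - int t - 1" "- int t - 1 - 1 = - int t - 2" by simp_all
    show "Psi p (Suc t) (Zp, N (-1)) = p (N (- int t - 1), N (- int t - 2))" using c by (simp only: e1)
  qed
  have "(\<lambda>t. Psi p (Suc t) (Zp, N (-1))) \<longlonglongrightarrow> 0" unfolding eq by (rule tail_l[OF p])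
  then show ?thesis by (rule LIMSEQ_imp_Suc)
qed

lemma four: "t + 4 = Suc (Suc (Suc (Suc t)))" by simp
lemma two: "t + 2 = Suc (Suc t)" by simp

lemma sP_lim: "p \<in> l2 \<Longrightarrow> (\<lambda>t. sP (Psi p t)) \<longlonglongrightarrow> 0"
proof (rule decay)
  fix t
  show "sP (Psi p (t + 4)) = sP (Psi p t) / 9 +
     (4/9 * Psi p t (N 0, N 1) + 4/3 * Psi p (t + 2) (Zp, N (-1)))"
    unfolding four two Psi_Suc sP_g sR_g sS_g sQ_g by (simp add: field_simps)
next
  assume p: "p \<in> l2"
  have "(\<lambda>t. Psi p (t + 2) (Zp, N (-1))) \<longlonglongrightarrow> 0" by (rule LIMSEQ_ignore_initial_segment[OF beta_lim[OF p]])
  then show "(\<lambda>t. 4/9 * Psi p t (N 0, N 1) + 4/3 * Psi p (t + 2) (Zp, N (-1))) \<longlonglongrightarrow> 0"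
    using alpha_lim[OF p] by (auto intro!: tendsto_add_zero tendsto_mult_right_zero)
qed

lemma sS_lim: "p \<in> l2 \<Longrightarrow> (\<lambda>t. sS (Psi p t)) \<longlonglongrightarrow> 0"
proof (rule decay)
  fix t
  show "sS (Psi p (t + 4)) = sS (Psi p t) / 9 +
     (4/9 * Psi p t (Zp, N (-1)) + 4/3 * Psi p (t + 2) (N 0, N 1))"
    unfolding four two Psi_Suc sP_g sR_g sS_g sQ_g by (simp add: field_simps)
next
  assume p: "p \<in> l2"
  have "(\<lambda>t. Psi p (t + 2) (N 0, N 1)) \<longlonglongrightarrow> 0" by (rule LIMSEQ_ignore_initial_segment[OF alpha_lim[OF p]])
  then show "(\<lambda>t. 4/9 * Psi p t (Zp, N (-1)) + 4/3 * Psi p (t + 2) (N 0, N 1)) \<longlonglongrightarrow> 0"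
    using beta_lim[OF p] by (auto intro!: tendsto_add_zero tendsto_mult_right_zero)
qed

lemma sR_lim: "p \<in> l2 \<Longrightarrow> (\<lambda>t. sR (Psi p t)) \<longlonglongrightarrow> 0"
  using LIMSEQ_Suc[OF sP_lim[of p]] by (simp add: Psi_Suc sP_g)

lemma sQ_lim: "p \<in> l2 \<Longrightarrow> (\<lambda>t. sQ (Psi p t)) \<longlonglongrightarrow> 0"
  using LIMSEQ_Suc[OF sS_lim[of p]] by (simp add: Psi_Suc sS_g)



lemma core_lim:
  assumes p: "p \<in> l2" and A: "Aen p = 0"
  shows "(\<lambda>t. Psi p t (N 0, Uv)) \<longlonglongrightarrow> 0" "(\<lambda>t. Psi p t (N 0, Dv)) \<longlonglongrightarrow> 0"
    "(\<lambda>t. Psi p t (Uv, N 0)) \<longlonglongrightarrow> 0" "(\<lambda>t. Psi p t (Dv, N 0)) \<longlonglongrightarrow> 0"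
    "(\<lambda>t. Psi p t (Uv, Zp)) \<longlonglongrightarrow> 0" "(\<lambda>t. Psi p t (Dv, Zp)) \<longlonglongrightarrow> 0"
    "(\<lambda>t. Psi p t (Zp, Uv)) \<longlonglongrightarrow> 0" "(\<lambda>t. Psi p t (Zp, Dv)) \<longlonglongrightarrow> 0"
proof -
  have d: "dP (Psi p t) = 0 \<and> dQ (Psi p t) = 0 \<and> dR (Psi p t) = 0 \<and> dS (Psi p t) = 0" for t
    using Aen_Psi[of p t] A Aen_zero by simp
  have h1: "\<And>x y :: complex. x - y = 0 \<Longrightarrow> x = (x + y) / 2" "\<And>x y :: complex. x - y = 0 \<Longrightarrow> y = (x + y) / 2"
    by (simp_all add: field_simps)
  have P: "(\<lambda>t. sP (Psi p t) / 2) \<longlonglongrightarrow> 0" using sP_lim[OF p] by (intro tendsto_divide_zero)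
  have Q: "(\<lambda>t. sQ (Psi p t) / 2) \<longlonglongrightarrow> 0" using sQ_lim[OF p] by (intro tendsto_divide_zero)
  have R: "(\<lambda>t. sR (Psi p t) / 2) \<longlonglongrightarrow> 0" using sR_lim[OF p] by (intro tendsto_divide_zero)
  have S: "(\<lambda>t. sS (Psi p t) / 2) \<longlonglongrightarrow> 0" using sS_lim[OF p] by (intro tendsto_divide_zero)
  have eP: "Psi p t (N 0, Uv) = sP (Psi p t) / 2" "Psi p t (N 0, Dv) = sP (Psi p t) / 2" for t
    using d[of t] unfolding dP_def sP_def by (auto intro: h1)
  have eQ: "Psi p t (Uv, N 0) = sQ (Psi p t) / 2" "Psi p t (Dv, N 0) = sQ (Psi p t) / 2" for t
    using d[of t] unfolding dQ_def sQ_def by (auto intro: h1)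
  have eR: "Psi p t (Uv, Zp) = sR (Psi p t) / 2" "Psi p t (Dv, Zp) = sR (Psi p t) / 2" for t
    using d[of t] unfolding dR_def sR_def by (auto intro: h1)
  have eS: "Psi p t (Zp, Uv) = sS (Psi p t) / 2" "Psi p t (Zp, Dv) = sS (Psi p t) / 2" for t
    using d[of t] unfolding dS_def sS_def by (auto intro: h1)
  show "(\<lambda>t. Psi p t (N 0, Uv)) \<longlonglongrightarrow> 0" "(\<lambda>t. Psi p t (N 0, Dv)) \<longlonglongrightarrow> 0"
    "(\<lambda>t. Psi p t (Uv, N 0)) \<longlonglongrightarrow> 0" "(\<lambda>t. Psi p t (Dv, N 0)) \<longlonglongrightarrow> 0"
    "(\<lambda>t. Psi p t (Uv, Zp)) \<longlonglongrightarrow> 0" "(\<lambda>t. Psi p t (Dv, Zp)) \<longlonglongrightarrow> 0"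
    "(\<lambda>t. Psi p t (Zp, Uv)) \<longlonglongrightarrow> 0" "(\<lambda>t. Psi p t (Zp, Dv)) \<longlonglongrightarrow> 0"
    unfolding eP eQ eR eS using P Q R S by simp_all
qed

lemma out0_lim:
  assumes p: "p \<in> l2" and A: "Aen p = 0"
  shows "(\<lambda>t. Psi p t (N 1, N 0)) \<longlonglongrightarrow> 0"
proof -
  have e: "Psi p (Suc t) (N 1, N 0) = 2/3 * (Psi p t (N 0, Uv) + Psi p t (N 0, Dv) + Psi p t (N 0, N 1)) - Psi p t (N 0, N 1)" for t
    unfolding Psi_Suc g_10 S0_def ..
  have "(\<lambda>t. Psi p (Suc t) (N 1, N 0)) \<longlonglongrightarrow> 0"
    unfolding e using core_lim(1,2)[OF p A] alpha_lim[OF p]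
    by (auto intro!: tendsto_diff[where a=0 and b=0, simplified] tendsto_add_zero tendsto_mult_right_zero)
  then show ?thesis by (rule LIMSEQ_imp_Suc)
qed

lemma outZ_lim:
  assumes p: "p \<in> l2" and A: "Aen p = 0"
  shows "(\<lambda>t. Psi p t (N (-1), Zp)) \<longlonglongrightarrow> 0"
proof -
  have e: "Psi p (Suc t) (N (-1), Zp) = 2/3 * (Psi p t (Zp, Uv) + Psi p t (Zp, Dv) + Psi p t (Zp, N (-1))) - Psi p t (Zp, N (-1))" for t
    unfolding Psi_Suc g_m1z SZ_def ..
  have "(\<lambda>t. Psi p (Suc t) (N (-1), Zp)) \<longlonglongrightarrow> 0"
    unfolding e using core_lim(7,8)[OF p A] beta_lim[OF p]
    by (auto intro!: tendsto_diff[where a=0 and b=0, simplified] tendsto_add_zero tendsto_mult_right_zero)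
  then show ?thesis by (rule LIMSEQ_imp_Suc)
qed

lemma outr_lim:
  assumes p: "p \<in> l2" and A: "Aen p = 0"
  shows "(\<lambda>t. Psi p t (N (int k + 1), N (int k))) \<longlonglongrightarrow> 0"
proof (induct k)
  case 0 then show ?case using out0_lim[OF p A] by simp
next
  case (Suc k)
  have e: "Psi p (Suc t) (N (int (Suc k) + 1), N (int (Suc k))) = Psi p t (N (int k + 1), N (int k))" for t
  proof -
    have "Psi p (Suc t) (N (int (Suc k) + 1), N (int (Suc k))) = grover (Psi p t) (N ((int k + 1) + 1), N (int k + 1))"
    proof -
      have i1: "int (Suc k) + 1 = (int k + 1) + 1" "int (Suc k) = int k + 1" by simp_all
      show ?thesis by (simp only: Psi_Suc i1)
    qed
    also have "\<dots> = Psi p t (N (int k + 1), N (int k + 1 - 1))" by (rule g_out_r) simp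
    finally show ?thesis by simp
  qed
  have "(\<lambda>t. Psi p (Suc t) (N (int (Suc k) + 1), N (int (Suc k)))) \<longlonglongrightarrow> 0"
    unfolding e by (rule Suc)
  then show ?case by (rule LIMSEQ_imp_Suc)
qed

lemma outl_lim:
  assumes p: "p \<in> l2" and A: "Aen p = 0"
  shows "(\<lambda>t. Psi p t (N (- int k - 2), N (- int k - 1))) \<longlonglongrightarrow> 0"
proof (induct k)
  case 0
  have "(\<lambda>t. Psi p (Suc t) (N (-2), N (-1))) \<longlonglongrightarrow> 0"
    unfolding Psi_Suc g_out_l1 by (rule outZ_lim[OF p A])
  then show ?case by (simp add: LIMSEQ_imp_Suc)
next
  case (Suc k)
  have e: "Psi p (Suc t) (N (- int (Suc k) - 2), N (- int (Suc k) - 1)) = Psi p t (N (- int k - 2), N (- int k - 1))" for t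
  proof -
    have "Psi p (Suc t) (N (- int (Suc k) - 2), N (- int (Suc k) - 1)) = grover (Psi p t) (N ((- int k - 2) - 1), N (- int k - 2))"
      by (simp add: Psi_Suc algebra_simps)
    also have "\<dots> = Psi p t (N (- int k - 2), N (- int k - 2 + 1))" by (rule g_out_l) simp
    also have "- int k - 2 + 1 = - int k - 1" by simp
    finally show ?thesis .
  qed
  have "(\<lambda>t. Psi p (Suc t) (N (- int (Suc k) - 2), N (- int (Suc k) - 1))) \<longlonglongrightarrow> 0"
    unfolding e by (rule Suc)
  then show ?case by (rule LIMSEQ_imp_Suc)
qed


lemma inr_lim:
  assumes p: "p \<in> l2" and n: "n \<ge> 1"
  shows "(\<lambda>t. Psi p t (N n, N (n + 1))) \<longlonglongrightarrow> 0"
proof -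
  define k where "k = nat (n - 1)"
  have k: "int k = n - 1" using n by (simp add: k_def)
  have "(\<lambda>t. p (N (int (t + k) + 1), N (int (t + k) + 2))) \<longlonglongrightarrow> 0"
    using LIMSEQ_ignore_initial_segment[OF tail_r[OF p], of k] by simp
  moreover have "p (N (int (t + k) + 1), N (int (t + k) + 2)) = Psi p t (N n, N (n + 1))" for t
  proof -
    have e: "int (t + k) + 1 = n + int t" "int (t + k) + 2 = n + int t + 1" using k by simp_all
    show ?thesis unfolding e by (rule in_r[OF n, symmetric])
  qed
  ultimately show ?thesis by simp
qed

lemma inl_lim:
  assumes p: "p \<in> l2" and n: "n \<le> -1"
  shows "(\<lambda>t. Psi p t (N n, N (n - 1))) \<longlonglongrightarrow> 0"
proof -
  define k where "k = nat (- n - 1)"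
  have k: "int k = - n - 1" using n by (simp add: k_def)
  have "(\<lambda>t. p (N (- int (t + k) - 1), N (- int (t + k) - 2))) \<longlonglongrightarrow> 0"
    using LIMSEQ_ignore_initial_segment[OF tail_l[OF p], of k] by simp
  moreover have "p (N (- int (t + k) - 1), N (- int (t + k) - 2)) = Psi p t (N n, N (n - 1))" for t
  proof -
    have e: "- int (t + k) - 1 = n - int t" "- int (t + k) - 2 = n - int t - 1" using k by simp_all
    show ?thesis unfolding e by (rule in_l[OF n, symmetric])
  qed
  ultimately show ?thesis by simp
qed

lemma all_lim:
  assumes p: "p \<in> l2" and A: "Aen p = 0" and w: "w \<in> nbrs v"
  shows "(\<lambda>t. Psi p t (v, w)) \<longlonglongrightarrow> 0"
proof (cases v)
  case (N n)
  consider "n = 0" | "n = -1" | "n \<ge> 1" | "n \<le> -2" by linarith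
  then show ?thesis
  proof cases
    case 1 then show ?thesis using w N core_lim(1,2)[OF p A] alpha_lim[OF p] by auto
  next
    case 2
    then have "w = Zp \<or> w = N (-2)" using w N by auto
    then show ?thesis using outZ_lim[OF p A] inl_lim[OF p, of "-1"] N 2 by auto
  next
    case 3
    then have "w = N (n - 1) \<or> w = N (n + 1)" using w N by auto
    moreover have "(\<lambda>t. Psi p t (N n, N (n - 1))) \<longlonglongrightarrow> 0"
    proof -
      have e: "int (nat (n - 1)) = n - 1" using 3 by simp
      show ?thesis using outr_lim[OF p A, of "nat (n - 1)"] unfolding e by simp
    qed
    ultimately show ?thesis using inr_lim[OF p 3] N by auto
  next
    case 4
    then have "w = N (n - 1) \<or> w = N (n + 1)" using w N by auto
    moreover have "(\<lambda>t. Psi p t (N n, N (n + 1))) \<longlonglongrightarrow> 0"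
    proof -
      have e: "int (nat (- n - 2)) = - n - 2" using 4 by simp
      show ?thesis using outl_lim[OF p A, of "nat (- n - 2)"] unfolding e by (simp add: add.commute)
    qed
    ultimately show ?thesis using inl_lim[OF p, of n] 4 N by auto
  qed
next
  case Uv then show ?thesis using w core_lim(3,5)[OF p A] by auto
next
  case Zp then show ?thesis using w core_lim(7,8)[OF p A] beta_lim[OF p] by auto
next
  case Dv then show ?thesis using w core_lim(4,6)[OF p A] by auto
qed

lemma mu_eq: "mu \<psi> v = (\<Sum>w\<in>nbrs v. (cmod (\<psi> (v, w)))\<^sup>2)"
  unfolding mu_def out_arcs by (subst sum.reindex) (auto simp: inj_on_def)

lemma probX_lim:
  assumes p: "p \<in> l2" and A: "Aen p = 0"
  shows "(\<lambda>t. probX (Psi p t) j) \<longlonglongrightarrow> 0"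
  unfolding probX_def mu_eq
proof (intro tendsto_null_sum)
  fix v w assume "w \<in> nbrs v"
  then have "(\<lambda>t. cmod (Psi p t (v, w))) \<longlonglongrightarrow> 0"
    using all_lim[OF p A] by (simp add: tendsto_norm_zero_iff)
  then have "(\<lambda>t. (cmod (Psi p t (v, w)))\<^sup>2) \<longlonglongrightarrow> 0\<^sup>2" by (rule tendsto_power)
  then show "(\<lambda>t. (cmod (Psi p t (v, w)))\<^sup>2) \<longlonglongrightarrow> 0" by simp
qed

lemma sq_ineq: "(cmod (a - b))\<^sup>2 \<le> 2 * (cmod a)\<^sup>2 + 2 * (cmod b)\<^sup>2"
proof -
  have "cmod (a - b) \<le> cmod a + cmod b" by (rule norm_triangle_ineq4)
  then have "(cmod (a - b))\<^sup>2 \<le> (cmod a + cmod b)\<^sup>2" by (intro power_mono) auto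
  also have "\<dots> \<le> 2 * (cmod a)\<^sup>2 + 2 * (cmod b)\<^sup>2"
    using sum_squares_ge_zero[of "cmod a - cmod b" 0] by (simp add: power2_eq_square algebra_simps)
  finally show ?thesis .
qed

lemma probX0_eq: "probX \<psi> 0 = ((cmod (\<psi> (N 0, Uv)))\<^sup>2 + (cmod (\<psi> (N 0, Dv)))\<^sup>2 + (cmod (\<psi> (N 0, N 1)))\<^sup>2)
   + ((cmod (\<psi> (Uv, N 0)))\<^sup>2 + (cmod (\<psi> (Uv, Zp)))\<^sup>2)
   + ((cmod (\<psi> (Zp, Uv)))\<^sup>2 + (cmod (\<psi> (Zp, Dv)))\<^sup>2 + (cmod (\<psi> (Zp, N (-1))))\<^sup>2)
   + ((cmod (\<psi> (Dv, Zp)))\<^sup>2 + (cmod (\<psi> (Dv, N 0)))\<^sup>2)"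
  unfolding probX_def Vset_def mu_eq by (simp add: add.assoc)

lemma probX0_ge: "Aen \<psi> \<le> 2 * probX \<psi> 0"
  unfolding probX0_eq Aen_def dP_def dQ_def dR_def dS_def
  using sq_ineq[of "\<psi> (N 0, Uv)" "\<psi> (N 0, Dv)"] sq_ineq[of "\<psi> (Uv, N 0)" "\<psi> (Dv, N 0)"]
    sq_ineq[of "\<psi> (Uv, Zp)" "\<psi> (Dv, Zp)"] sq_ineq[of "\<psi> (Zp, Uv)" "\<psi> (Zp, Dv)"]
    zero_le_power2[of "cmod (\<psi> (N 0, N 1))"] zero_le_power2[of "cmod (\<psi> (Zp, N (-1)))"]
  unfolding distrib_left by linarith

theorem theorem1p2:
  fixes \<Psi>0 :: "vert \<times> vert \<Rightarrow> complex"
  assumes "\<Psi>0 \<in> l2" and "l2norm \<Psi>0 = 1"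
  shows "(\<exists>j::int. limsup (\<lambda>t. ereal (probX ((grover ^^ t) \<Psi>0) j)) > 0)
           \<longleftrightarrow> \<Psi>0 \<notin> perp Gamma"
proof -
  have perp: "\<Psi>0 \<in> perp Gamma \<longleftrightarrow> Aen \<Psi>0 = 0" using perp_iff[OF assms(1)] Aen_zero by simp
  have PD: "(grover ^^ t) \<Psi>0 = Psi \<Psi>0 t" for t by (simp add: Psi_def)
  show ?thesis
  proof (cases "Aen \<Psi>0 = 0")
    case True
    have "limsup (\<lambda>t. ereal (probX ((grover ^^ t) \<Psi>0) j)) = 0" for j
    proof -
      have "(\<lambda>t. ereal (probX (Psi \<Psi>0 t) j)) \<longlonglongrightarrow> ereal 0"
        by (intro tendsto_ereal probX_lim assms(1) True)
      then show ?thesis unfolding PD zero_ereal_def by (rule lim_imp_Limsup[OF trivial_limit_sequentially])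
    qed
    then show ?thesis using perp True by simp
  next
    case False
    have ge: "0 \<le> Aen \<Psi>0" unfolding Aen_def by simp
    have A0: "0 < Aen \<Psi>0" using order_le_neq_trans[OF ge] False by auto
    have b: "ereal (Aen \<Psi>0 / 2) \<le> ereal (probX (Psi \<Psi>0 t) 0)" for t
    proof -
      have "Aen (Psi \<Psi>0 t) \<le> 2 * probX (Psi \<Psi>0 t) 0" by (rule probX0_ge)
      then show ?thesis unfolding Aen_Psi by simp
    qed
    have L: "ereal (Aen \<Psi>0 / 2) \<le> limsup (\<lambda>t. ereal (probX ((grover ^^ t) \<Psi>0) 0))"
    proof (rule le_Limsup)
      show "\<forall>\<^sub>F t in sequentially. ereal (Aen \<Psi>0 / 2) \<le> ereal (probX ((grover ^^ t) \<Psi>0) 0)"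
        unfolding PD by (intro always_eventually allI b)
    qed simp
    have "0 < ereal (Aen \<Psi>0 / 2)" using A0 by simp
    then have "0 < limsup (\<lambda>t. ereal (probX ((grover ^^ t) \<Psi>0) 0))" using L by (rule less_le_trans)
    then show ?thesis using perp False by blast
  qed

qed

end
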